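(* Let $2\leq k\leq d$, $\theta>0$, $v_1,\dots,v_k,w\in S^{d-1}$, and suppose $\Theta(\sigma(0,v_1,\dots,v_k))\geq\theta$. Then there exists $1\leq i\leq k$ such that $$\Theta(\sigma(0,v_1,\dots,v_{i-1},w,v_{i+1},\dots,v_k))\geq\frac{\theta}{k\,2^{k+1}}.$$
   Context: For $a_0,\dots,a_k\in\mathbb{R}^d$, $\sigma(a_0,\dots,a_k)=\operatorname{conv}\{a_0,\dots,a_k\}$, $|\sigma|$ denotes its $k$-dimensional volume, and for $\operatorname{diam}\sigma>0$ the fullness is $\Theta(\sigma)=|\sigma|/(\operatorname{diam}\sigma)^k$. $S^{d-1}$ is the unit sphere of $\mathbb{R}^d$. *)

theory Defs
  imports "HOL-Analysis.Analysis"
begin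

definition gram_det :: "nat \<Rightarrow> (nat \<Rightarrow> 'a::real_inner) \<Rightarrow> real" where
  "gram_det k u = (\<Sum>p | p permutes {..<k}. of_int (sign p) * (\<Prod>i<k. u i \<bullet> u (p i)))"

text \<open>k-dimensional volume of the simplex conv{a 0, ..., a k}:
  sqrt of the Gram determinant of the edge vectors a i - a 0, divided by k!.\<close>
definition simplex_vol :: "nat \<Rightarrow> (nat \<Rightarrow> 'a::real_inner) \<Rightarrow> real" where
  "simplex_vol k a = sqrt (gram_det k (\<lambda>i. a (Suc i) - a 0)) / fact k"

definition fullness :: "nat \<Rightarrow> (nat \<Rightarrow> 'a::real_inner) \<Rightarrow> real" where
  "fullness k a = simplex_vol k a / (diameter (convex hull (a ` {0..k}))) ^ k"

definition origin_pts :: "(nat \<Rightarrow> 'a::zero) \<Rightarrow> nat \<Rightarrow> 'a" where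
  "origin_pts v = (\<lambda>j. if j = 0 then 0 else v j)"

end

theory Submission
  imports Defs "Jordan_Normal_Form.Determinant"
begin
definition gmat :: "nat \<Rightarrow> (nat \<Rightarrow> 'a::real_inner) \<Rightarrow> real mat" where
  "gmat k u = mat k k (\<lambda>(i,j). u i \<bullet> u j)"

lemma gram_det_gmat: "gram_det k u = det (gmat k u)"
  unfolding gram_det_def det_def gmat_def
  by (simp add: atLeast0LessThan)

lemma gmat_carrier[simp]: "gmat k u \<in> carrier_mat k k"
  by (simp add: gmat_def)

lemma gram_det_perm:
  assumes p: "p permutes {..<k}"
  shows "gram_det k (u \<circ> p) = gram_det k u"
proof -
  let ?A = "gmat k u"
  have p': "p permutes {0..<k}" using p by (simp add: atLeast0LessThan)
  have pk: "i < k \<Longrightarrow> p i < k" for i using permutes_in_image[OF p, of i] by simp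
  let ?B = "mat k k (\<lambda>(i,j). ?A $$ (i, p j))"
  have B: "?B \<in> carrier_mat k k" by simp
  have "transpose_mat ?B = mat k k (\<lambda>(i,j). transpose_mat ?A $$ (p i, j))"
    by (rule eq_matI) (auto simp: pk gmat_def)
  hence "det (transpose_mat ?B) = signof p * det (transpose_mat ?A)"
    using det_permute_rows[OF _ p', of "transpose_mat ?A"] by simp
  hence dB: "det ?B = signof p * det ?A"
    by (simp add: det_transpose[OF B] det_transpose[OF gmat_carrier])
  have "gmat k (u \<circ> p) = mat k k (\<lambda>(i,j). ?B $$ (p i, j))"
    by (rule eq_matI) (auto simp: pk gmat_def)
  hence "det (gmat k (u \<circ> p)) = signof p * det ?B"
    using det_permute_rows[OF B p'] by simp
  also have "\<dots> = (signof p * signof p) * det ?A" by (simp add: dB)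
  also have "signof p * signof p = (1::real)" by (simp add: sign_def)
  finally show ?thesis by (simp add: gram_det_gmat o_def)
qed

lemma gram_det_lin:
  fixes u :: "nat \<Rightarrow> 'a::real_inner"
  assumes T: "T \<in> carrier_mat k k"
    and u': "\<And>i. i < k \<Longrightarrow> u' i = (\<Sum>l<k. T $$ (l,i) *\<^sub>R u l)"
  shows "gram_det k u' = (det T)^2 * gram_det k u"
proof -
  have "gmat k u' = transpose_mat T * gmat k u * T"
  proof (rule eq_matI)
    fix i j assume i: "i < dim_row (transpose_mat T * gmat k u * T)"
      and j: "j < dim_col (transpose_mat T * gmat k u * T)"
    hence ik: "i < k" and jk: "j < k" using T by auto
    have "gmat k u' $$ (i,j) = u' i \<bullet> u' j" using ik jk by (simp add: gmat_def)
    also have "\<dots> = (\<Sum>m<k. \<Sum>l<k. T $$ (l,i) * (u l \<bullet> u m) * T $$ (m,j))"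
      by (simp add: u' ik jk inner_sum_left inner_sum_right sum_distrib_left mult_ac inner_commute)
    also have "\<dots> = (\<Sum>m<k. (\<Sum>l<k. T $$ (l,i) * (u l \<bullet> u m)) * T $$ (m,j))"
      by (simp add: sum_distrib_right)
    also have "\<dots> = (transpose_mat T * gmat k u * T) $$ (i,j)"
      using T ik jk
      by (simp add: scalar_prod_def gmat_def atLeast0LessThan carrier_matD)
    finally show "gmat k u' $$ (i,j) = (transpose_mat T * gmat k u * T) $$ (i,j)" .
  qed (use T in \<open>auto simp: gmat_def\<close>)
  hence "det (gmat k u') = det (transpose_mat T) * det (gmat k u) * det T"
    using T by (simp add: det_mult[of _ k])
  thus ?thesis using T by (simp add: det_transpose gram_det_gmat power2_eq_square)
qed
lemma gram_det_block:
  fixes u :: "nat \<Rightarrow> 'a::real_inner"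
  assumes x: "\<And>j. j < n \<Longrightarrow> x \<bullet> u j = 0"
  shows "gram_det (Suc n) (u(n:=x)) = (x \<bullet> x) * gram_det n u"
proof -
  have "gmat (Suc n) (u(n:=x)) = four_block_mat (gmat n u) (0\<^sub>m n 1) (0\<^sub>m 1 n) (mat 1 1 (\<lambda>_. x \<bullet> x))"
    by (rule eq_matI) (auto simp: gmat_def four_block_mat_def x inner_commute[of "u _" x])
  hence "det (gmat (Suc n) (u(n:=x))) = det (gmat n u) * det (mat 1 1 (\<lambda>_. x \<bullet> x))"
    by (simp add: det_four_block_mat_lower_left_zero[of _ n _ 1])
  also have "det (mat 1 1 (\<lambda>_. x \<bullet> x)) = x \<bullet> x" by (simp add: det_single)
  finally show ?thesis by (simp add: gram_det_gmat fun_upd_def mult.commute)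
qed

lemma gram_det_addcomb:
  fixes u :: "nat \<Rightarrow> 'a::real_inner"
  shows "gram_det (Suc n) (u(n := x + (\<Sum>j<n. c j *\<^sub>R u j))) = gram_det (Suc n) (u(n:=x))"
proof -
  define T :: "real mat" where "T = mat (Suc n) (Suc n) (\<lambda>(l,i). if l = i then 1 else if i = n \<and> l < n then c l else 0)"
  have T: "T \<in> carrier_mat (Suc n) (Suc n)" by (simp add: T_def)
  have ut: "upper_triangular T" by (auto simp: T_def upper_triangular_def)
  have "det T = prod_list (diag_mat T)" by (rule det_upper_triangular[OF ut T])
  also have "diag_mat T = map (\<lambda>_. 1) [0..<Suc n]"
    by (auto simp: diag_mat_def T_def)
  finally have dT: "det T = 1" by (simp del: upt_Suc add: map_replicate_const)
  have "gram_det (Suc n) (u(n := x + (\<Sum>j<n. c j *\<^sub>R u j))) = (det T)^2 * gram_det (Suc n) (u(n:=x))"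
  proof (rule gram_det_lin[OF T])
    fix i assume i: "i < Suc n"
    show "(u(n := x + (\<Sum>j<n. c j *\<^sub>R u j))) i = (\<Sum>l<Suc n. T $$ (l,i) *\<^sub>R (u(n:=x)) l)"
    proof (cases "i = n")
      case True
      have "(\<Sum>l<Suc n. T $$ (l,i) *\<^sub>R (u(n:=x)) l) = (\<Sum>l<n. c l *\<^sub>R u l) + x"
        using True by (simp add: T_def)
      thus ?thesis using True by simp
    next
      case False
      hence "i < n" using i by simp
      have "(\<Sum>l<Suc n. T $$ (l,i) *\<^sub>R (u(n:=x)) l) = (\<Sum>l<Suc n. (if l = i then u i else 0))"
        by (rule sum.cong) (use i False in \<open>auto simp: T_def\<close>)
      also have "\<dots> = u i" using i by simp
      finally show ?thesis using False by simp
    qed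
  qed
  thus ?thesis by (simp add: dT)
qed

lemma test_delta: "j < (n::nat) \<Longrightarrow> (\<Sum>l<n. if l = j then c *\<^sub>R (u l::'a::real_vector) else 0) = c *\<^sub>R u j"
  by simp

lemma span_comb:
  fixes u :: "nat \<Rightarrow> 'a::real_vector"
  assumes "a \<in> span (u ` {..<n})"
  shows "\<exists>c. a = (\<Sum>j<n. c j *\<^sub>R u j)"
  using assms
proof (induction rule: span_induct_alt)
  case base
  show ?case by (rule exI[of _ "\<lambda>_. 0"]) simp
next
  case (step c x y)
  then obtain d where d: "y = (\<Sum>j<n. d j *\<^sub>R u j)" by blast
  from step obtain j where j: "j < n" "x = u j" by auto
  have "c *\<^sub>R x + y = (\<Sum>l<n. (d(j := d j + c)) l *\<^sub>R u l)"
  proof -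
    have "(\<Sum>l<n. (d(j := d j + c)) l *\<^sub>R u l) = (\<Sum>l<n. d l *\<^sub>R u l + (if l = j then c *\<^sub>R u l else 0))"
      by (rule sum.cong) (auto simp: algebra_simps)
    also have "\<dots> = y + (\<Sum>l<n. if l = j then c *\<^sub>R u l else 0)" by (simp add: sum.distrib d)
    also have "(\<Sum>l<n. if l = j then c *\<^sub>R u l else 0) = c *\<^sub>R u j"
      using sum.delta[of "{..<n}" j "\<lambda>l. c *\<^sub>R u l"] j by simp
    also have "y + c *\<^sub>R u j = y + c *\<^sub>R x" using j by simp
    finally show ?thesis by simp
  qed
  thus ?case by blast
qed

lemma decomp:
  fixes u :: "nat \<Rightarrow> 'a::euclidean_space"
  obtains c p where "x = (\<Sum>j<n. c j *\<^sub>R u j) + p" "\<And>j. j < n \<Longrightarrow> p \<bullet> u j = 0"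
proof -
  obtain y z where y: "y \<in> span (u ` {..<n})" and z: "\<forall>w \<in> span (u ` {..<n}). z \<bullet> w = 0"
    and x: "x = y + z"
    using orthogonal_subspace_decomp_exists[of "u ` {..<n}" x] unfolding real_inner_class.orthogonal_def
    by metis
  obtain c where "y = (\<Sum>j<n. c j *\<^sub>R u j)" using span_comb[OF y] by blast
  moreover have "z \<bullet> u j = 0" if "j < n" for j
    using z that by (auto simp: span_base)
  ultimately show ?thesis using that x by blast
qed
lemma gram_det_nonneg:
  fixes u :: "nat \<Rightarrow> 'a::euclidean_space"
  shows "gram_det n u \<ge> 0"
proof (induction n)
  case 0
  show ?case by (simp add: gram_det_gmat gmat_def)
next
  case (Suc n)
  obtain d q where uq: "u n = (\<Sum>j<n. d j *\<^sub>R u j) + q" and q: "\<And>j. j < n \<Longrightarrow> q \<bullet> u j = 0"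
    using decomp[where x="u n" and n=n and u=u] by metis
  have "u = u(n := q + (\<Sum>j<n. d j *\<^sub>R u j))" using uq by (auto simp: add.commute)
  hence "gram_det (Suc n) u = gram_det (Suc n) (u(n := q + (\<Sum>j<n. d j *\<^sub>R u j)))" by simp
  also have "\<dots> = gram_det (Suc n) (u(n := q))" by (rule gram_det_addcomb)
  also have "\<dots> = (q \<bullet> q) * gram_det n u" by (rule gram_det_block[OF q])
  finally show ?case using Suc by simp
qed

lemma key_last:
  fixes u :: "nat \<Rightarrow> 'a::euclidean_space"
  assumes un: "norm (u n) \<le> 1" and p: "\<And>j. j \<le> n \<Longrightarrow> p \<bullet> u j = 0"
  shows "gram_det (Suc n) (u(n := (\<Sum>j<Suc n. c j *\<^sub>R u j) + p)) \<ge> ((c n)^2 + p \<bullet> p) * gram_det (Suc n) u"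
proof -
  obtain d q where uq: "u n = (\<Sum>j<n. d j *\<^sub>R u j) + q" and q: "\<And>j. j < n \<Longrightarrow> q \<bullet> u j = 0"
    using decomp[where x="u n" and n=n and u=u] by metis
  define b where "b = (\<Sum>j<n. d j *\<^sub>R u j)"
  define Gm where "Gm = gram_det n u"
  have Gm: "Gm \<ge> 0" unfolding Gm_def by (rule gram_det_nonneg)
  have pb: "p \<bullet> b = 0" unfolding b_def using p by (simp add: inner_sum_right)
  have qb: "q \<bullet> b = 0" unfolding b_def using q by (simp add: inner_sum_right)
  have qp: "q \<bullet> p = 0"
  proof -
    have "q = u n - b" using uq b_def by simp
    moreover have "u n \<bullet> p = 0" using p[of n] by (simp add: inner_commute)
    moreover have "b \<bullet> p = 0" using pb by (simp add: inner_commute)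
    ultimately show ?thesis by (simp add: inner_diff_left)
  qed
  have e: "(\<Sum>j<Suc n. c j *\<^sub>R u j) + p = (c n *\<^sub>R u n + p) + (\<Sum>j<n. c j *\<^sub>R u j)" by simp
  have "gram_det (Suc n) (u(n := (\<Sum>j<Suc n. c j *\<^sub>R u j) + p))
      = gram_det (Suc n) (u(n := c n *\<^sub>R u n + p))" unfolding e by (rule gram_det_addcomb)
  also have "c n *\<^sub>R u n + p = (c n *\<^sub>R q + p) + (\<Sum>j<n. (c n * d j) *\<^sub>R u j)"
    using uq by (simp add: scaleR_right.sum algebra_simps)
  also have "gram_det (Suc n) (u(n := (c n *\<^sub>R q + p) + (\<Sum>j<n. (c n * d j) *\<^sub>R u j)))
      = gram_det (Suc n) (u(n := c n *\<^sub>R q + p))" by (rule gram_det_addcomb)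
  also have "\<dots> = ((c n *\<^sub>R q + p) \<bullet> (c n *\<^sub>R q + p)) * Gm"
    unfolding Gm_def by (rule gram_det_block) (simp add: q p inner_add_left)
  also have "(c n *\<^sub>R q + p) \<bullet> (c n *\<^sub>R q + p) = (c n)^2 * (q \<bullet> q) + p \<bullet> p"
    using qp by (simp add: inner_add_left inner_add_right inner_commute power2_eq_square)
  finally have L: "gram_det (Suc n) (u(n := (\<Sum>j<Suc n. c j *\<^sub>R u j) + p)) = ((c n)^2 * (q \<bullet> q) + p \<bullet> p) * Gm" .
  have "u = u(n := q + b)" using uq b_def by (auto simp: add.commute)
  hence "gram_det (Suc n) u = gram_det (Suc n) (u(n := q + b))" by simp
  also have "\<dots> = gram_det (Suc n) (u(n := q))" unfolding b_def by (rule gram_det_addcomb)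
  also have "\<dots> = (q \<bullet> q) * Gm" unfolding Gm_def by (rule gram_det_block[OF q])
  finally have G: "gram_det (Suc n) u = (q \<bullet> q) * Gm" .
  have "u n \<bullet> u n = b \<bullet> b + q \<bullet> q" using uq b_def qb
    by (simp add: inner_add_left inner_add_right inner_commute)
  moreover have "u n \<bullet> u n \<le> 1"
  proof -
    have "norm (u n) ^ 2 \<le> 1" using un by (simp add: power_le_one)
    thus ?thesis by (simp add: power2_norm_eq_inner)
  qed
  ultimately have qq: "q \<bullet> q \<le> 1" by (smt (verit) inner_ge_zero)
  have qq0: "q \<bullet> q \<ge> 0" by simp
  have "p \<bullet> p * ((q \<bullet> q) * Gm) \<le> p \<bullet> p * Gm"
    using qq qq0 Gm by (intro mult_left_mono) (auto simp: mult_left_le_one_le)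
  thus ?thesis unfolding L G by (simp add: algebra_simps)
qed
lemma key_gen:
  fixes u :: "nat \<Rightarrow> 'a::euclidean_space"
  assumes i: "i < Suc n" and ui: "norm (u i) \<le> 1" and p: "\<And>j. j < Suc n \<Longrightarrow> p \<bullet> u j = 0"
  shows "gram_det (Suc n) (u(i := (\<Sum>j<Suc n. c j *\<^sub>R u j) + p)) \<ge> ((c i)^2 + p \<bullet> p) * gram_det (Suc n) u"
proof -
  define \<pi> where "\<pi> = Transposition.transpose i n"
  have perm: "\<pi> permutes {..<Suc n}" unfolding \<pi>_def using i by (intro permutes_swap_id) auto
  have \<pi>n: "\<pi> n = i" by (simp add: \<pi>_def)
  have \<pi>lt: "j < Suc n \<Longrightarrow> \<pi> j < Suc n" for j using permutes_in_image[OF perm, of j] by simp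
  define w where "w = (\<Sum>j<Suc n. c j *\<^sub>R u j) + p"
  have w: "w = (\<Sum>j<Suc n. (c \<circ> \<pi>) j *\<^sub>R (u \<circ> \<pi>) j) + p"
    unfolding w_def using sum.permute[OF perm, of "\<lambda>j. c j *\<^sub>R u j"] by (simp add: o_def)
  have eqf: "u(i := w) \<circ> \<pi> = (u \<circ> \<pi>)(n := w)"
  proof
    fix j
    show "(u(i := w) \<circ> \<pi>) j = ((u \<circ> \<pi>)(n := w)) j"
    proof (cases "j = n")
      case True thus ?thesis by (simp add: \<pi>n)
    next
      case False
      hence "\<pi> j \<noteq> i" unfolding \<pi>_def using i by (auto simp: Transposition.transpose_def split: if_splits)
      thus ?thesis using False by simp
    qed
  qed
  have "gram_det (Suc n) (u(i := w)) = gram_det (Suc n) (u(i := w) \<circ> \<pi>)"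
    by (rule gram_det_perm[OF perm, symmetric])
  also have "\<dots> = gram_det (Suc n) ((u \<circ> \<pi>)(n := (\<Sum>j<Suc n. (c \<circ> \<pi>) j *\<^sub>R (u \<circ> \<pi>) j) + p))"
    by (simp only: eqf w[symmetric])
  also have "\<dots> \<ge> (((c \<circ> \<pi>) n)^2 + p \<bullet> p) * gram_det (Suc n) (u \<circ> \<pi>)"
    by (rule key_last) (use ui \<pi>n p \<pi>lt in auto)
  finally show ?thesis using gram_det_perm[OF perm, of u] by (simp add: w_def \<pi>n o_def)
qed

lemma main_ineq:
  fixes u :: "nat \<Rightarrow> 'a::euclidean_space"
  assumes k: "0 < k" and u: "\<And>j. j < k \<Longrightarrow> norm (u j) = 1" and w: "norm w = 1"
  shows "\<exists>i<k. gram_det k (u(i := w)) \<ge> gram_det k u / (4 * (real k)^2)"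
proof -
  obtain n where kn: "k = Suc n" using k by (cases k) auto
  obtain c p where wd: "w = (\<Sum>j<k. c j *\<^sub>R u j) + p" and p: "\<And>j. j < k \<Longrightarrow> p \<bullet> u j = 0"
    using decomp[where x=w and n=k and u=u] by metis
  define G where "G = gram_det k u"
  have G0: "G \<ge> 0" unfolding G_def by (rule gram_det_nonneg)
  have K: "\<And>i. i < k \<Longrightarrow> gram_det k (u(i := w)) \<ge> ((c i)^2 + p \<bullet> p) * G"
    unfolding G_def wd kn by (rule key_gen) (use u p kn in auto)
  have k2: "4 * (real k)^2 > 0" using k by simp
  show ?thesis
  proof (cases "p \<bullet> p \<ge> 1 / (4 * (real k)^2)")
    case True
    have "G / (4 * (real k)^2) = (1 / (4 * (real k)^2)) * G" by simp
    also have "\<dots> \<le> ((c 0)^2 + p \<bullet> p) * G"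
      using True G0 by (intro mult_right_mono) (auto intro: add_increasing)
    also have "\<dots> \<le> gram_det k (u(0 := w))" using K k by blast
    finally show ?thesis using k unfolding G_def by blast
  next
    case False
    define a where "a = (\<Sum>j<k. c j *\<^sub>R u j)"
    have "p \<bullet> a = 0" unfolding a_def using p by (simp add: inner_sum_right)
    hence ap: "a \<bullet> p = 0" by (simp add: inner_commute)
    have "1 = w \<bullet> w" using w by (simp add: power2_norm_eq_inner[symmetric])
    also have "\<dots> = a \<bullet> a + p \<bullet> p" using ap unfolding wd a_def[symmetric]
      by (simp add: inner_add_left inner_add_right inner_commute)
    finally have aa: "a \<bullet> a = 1 - p \<bullet> p" by simp
    have "1 / (4 * (real k)^2) \<le> 1 / 4"
    proof -
      have "real k \<ge> 1" using k by simp
      hence "(real k)^2 \<ge> 1" by (simp add: one_le_power)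
      thus ?thesis using k by (intro divide_left_mono) auto
    qed
    hence "a \<bullet> a \<ge> 1/4" using False aa by simp
    hence "norm a ^ 2 \<ge> (1/2)^2" using power2_norm_eq_inner[of a] by (simp add: power2_eq_square)
    hence na: "norm a \<ge> 1/2" by (rule power2_le_imp_le) simp
    have "norm a \<le> (\<Sum>j<k. norm (c j *\<^sub>R u j))" unfolding a_def by (rule norm_sum)
    also have "\<dots> = (\<Sum>j<k. \<bar>c j\<bar>)" using u by (intro sum.cong) auto
    finally have sa: "(\<Sum>j<k. \<bar>c j\<bar>) \<ge> 1/2" using na by simp
    have "\<exists>i<k. \<bar>c i\<bar> \<ge> 1 / (2 * real k)"
    proof (rule ccontr)
      assume "\<not> ?thesis"
      hence "\<And>j. j < k \<Longrightarrow> \<bar>c j\<bar> < 1 / (2 * real k)" by auto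
      hence "(\<Sum>j<k. \<bar>c j\<bar>) < (\<Sum>j<k. 1 / (2 * real k))"
        using k by (intro sum_strict_mono) auto
      also have "\<dots> = 1/2" using k by simp
      finally show False using sa by simp
    qed
    then obtain i where i: "i < k" and ci: "\<bar>c i\<bar> \<ge> 1 / (2 * real k)" by blast
    have "(1 / (2 * real k))^2 \<le> \<bar>c i\<bar>^2" using ci k by (intro power_mono) auto
    hence ci2: "1 / (4 * (real k)^2) \<le> (c i)^2" by (simp add: power2_eq_square)
    have "G / (4 * (real k)^2) = (1 / (4 * (real k)^2)) * G" by simp
    also have "\<dots> \<le> ((c i)^2 + p \<bullet> p) * G"
      using ci2 G0 by (intro mult_right_mono add_increasing2) auto
    also have "\<dots> \<le> gram_det k (u(i := w))" using K i by blast
    finally show ?thesis using i unfolding G_def by blast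
  qed
qed
lemma diam_bounds:
  fixes a :: "nat \<Rightarrow> 'a::euclidean_space"
  assumes k: "1 \<le> k" and a0: "a 0 = 0" and a1: "\<And>j. j \<in> {1..k} \<Longrightarrow> norm (a j) = 1"
  shows "1 \<le> diameter (convex hull (a ` {0..k}))" and "diameter (convex hull (a ` {0..k})) \<le> 2"
proof -
  let ?S = "a ` {0..k}"
  let ?H = "convex hull ?S"
  have bH: "bounded ?H" by (intro compact_imp_bounded finite_imp_compact_convex_hull) simp
  have in0: "a 0 \<in> ?H" by (intro hull_inc) auto
  have in1: "a 1 \<in> ?H" using k by (intro hull_inc) auto
  have "dist (a 0) (a 1) = 1" using a0 a1[of 1] k by simp
  thus "1 \<le> diameter ?H" using diameter_bounded_bound[OF bH in0 in1] by simp
  have "?S \<subseteq> cball 0 1"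
  proof
    fix x assume "x \<in> ?S"
    then obtain j where j: "j \<in> {0..k}" "x = a j" by auto
    show "x \<in> cball 0 1"
    proof (cases "j = 0")
      case True thus ?thesis using j a0 by simp
    next
      case False thus ?thesis using j a1[of j] by simp
    qed
  qed
  hence Hc: "?H \<subseteq> cball 0 1" by (intro hull_minimal) (auto simp: convex_cball)
  show "diameter ?H \<le> 2"
  proof (rule diameter_le)
    show "?H \<noteq> {} \<or> 0 \<le> (2::real)" by simp
    fix x y assume "x \<in> ?H" "y \<in> ?H"
    hence "norm x \<le> 1" "norm y \<le> 1" using Hc by auto
    thus "norm (x - y) \<le> 2" using norm_triangle_ineq4[of x y] by simp
  qed
qed

theorem lemma3p6:
  fixes v :: "nat \<Rightarrow> real ^ 'n" and w :: "real ^ 'n" and k :: nat and \<theta> :: real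
  assumes "2 \<le> k" and "k \<le> CARD('n)" and "\<theta> > 0"
    and "\<forall>i\<in>{1..k}. norm (v i) = 1" and "norm w = 1"
    and "fullness k (origin_pts v) \<ge> \<theta>"
  shows "\<exists>i\<in>{1..k}. fullness k (origin_pts (v(i := w))) \<ge> \<theta> / (real k * 2 ^ (k + 1))"
proof -
  note vn = assms(4) and wn = assms(5) and F = assms(6)
  have k1: "1 \<le> k" and k0: "0 < k" using assms(1) by auto
  define u where "u = (\<lambda>j. v (Suc j))"
  have un: "\<And>j. j < k \<Longrightarrow> norm (u j) = 1" using vn by (auto simp: u_def)
  have "\<exists>i<k. gram_det k (u(i := w)) \<ge> gram_det k u / (4 * (real k)^2)"
    by (rule main_ineq[OF k0 un wn])
  then obtain i0 where i0: "i0 < k" and Gi: "gram_det k (u(i0 := w)) \<ge> gram_det k u / (4 * (real k)^2)"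
    by (elim exE conjE)
  define i where "i = Suc i0"
  have iI: "i \<in> {1..k}" using i0 by (simp add: i_def)
  define G where "G = gram_det k u"
  define G' where "G' = gram_det k (u(i0 := w))"
  have G0: "G \<ge> 0" unfolding G_def by (rule gram_det_nonneg)
  have eq1: "(\<lambda>j. origin_pts v (Suc j) - origin_pts v 0) = u"
    by (auto simp: origin_pts_def u_def)
  have eq2: "(\<lambda>j. origin_pts (v(i := w)) (Suc j) - origin_pts (v(i := w)) 0) = u(i0 := w)"
    by (auto simp: origin_pts_def u_def i_def)
  define D where "D = diameter (convex hull (origin_pts v ` {0..k}))"
  define D' where "D' = diameter (convex hull (origin_pts (v(i := w)) ` {0..k}))"
  have D1: "1 \<le> D" unfolding D_def
    by (rule diam_bounds(1)[OF k1]) (use vn in \<open>auto simp: origin_pts_def\<close>)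
  have D'1: "1 \<le> D'" and D'2: "D' \<le> 2" unfolding D'_def
    by (rule diam_bounds[OF k1]; use vn wn in \<open>auto simp: origin_pts_def\<close>)+
  have Fv: "fullness k (origin_pts v) = sqrt G / fact k / D ^ k"
    unfolding fullness_def simplex_vol_def eq1 G_def D_def by simp
  have Fv': "fullness k (origin_pts (v(i := w))) = sqrt G' / fact k / D' ^ k"
    unfolding fullness_def simplex_vol_def eq2 G'_def D'_def by simp
  define s where "s = sqrt G / fact k"
  have s0: "s \<ge> 0" unfolding s_def using G0 by simp
  have Dk: "1 \<le> D ^ k" using D1 by (simp add: one_le_power)
  have "s / D ^ k \<le> s / 1" using Dk s0 by (intro divide_left_mono) auto
  hence ths: "\<theta> \<le> s" using F Fv s_def by simp
  have "sqrt (G / (4 * (real k)^2)) = sqrt G / (2 * real k)"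
    by (simp add: real_sqrt_divide real_sqrt_mult)
  moreover have "sqrt (G / (4 * (real k)^2)) \<le> sqrt G'" using Gi G'_def G_def by simp
  ultimately have "sqrt G / (2 * real k) \<le> sqrt G'" by simp
  hence "sqrt G / (2 * real k) / fact k \<le> sqrt G' / fact k"
    by (intro divide_right_mono) auto
  moreover have "s / (2 * real k) = sqrt G / (2 * real k) / fact k" unfolding s_def by simp
  ultimately have "s / (2 * real k) \<le> sqrt G' / fact k" by simp
  hence h2: "s / (2 * real k) / 2 ^ k \<le> sqrt G' / fact k / 2 ^ k"
    by (intro divide_right_mono) auto
  have "D' ^ k \<le> 2 ^ k" using D'1 D'2 by (intro power_mono) auto
  moreover have "0 < D' ^ k" using D'1 by simp
  moreover have "sqrt G' \<ge> 0" using gram_det_nonneg[of k "u(i0 := w)"] G'_def by simp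
  ultimately have h3: "sqrt G' / fact k / 2 ^ k \<le> sqrt G' / fact k / D' ^ k"
    by (intro divide_left_mono) auto
  have "\<theta> / (real k * 2 ^ (k + 1)) = \<theta> / (2 * real k) / 2 ^ k" by (simp add: field_simps)
  also have "\<dots> \<le> s / (2 * real k) / 2 ^ k" using ths k0 by (intro divide_right_mono) auto
  also note h2
  also note h3
  finally have fin: "\<theta> / (real k * 2 ^ (k + 1)) \<le> sqrt G' / fact k / D' ^ k" .
  have "\<theta> / (real k * 2 ^ (k + 1)) \<le> fullness k (origin_pts (v(i := w)))"
    unfolding Fv' by (rule fin)
  thus ?thesis using iI by (rule bexI)
qed
end
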